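(* In the setting described in the context, for every $\gamma \in (0,\frac12)$ and every $\lambda_0 > 1$ we have, at every point of $\mathbb{R}^n$, \[\max\{u_0,\dots,u_q\} \leq \hat u_q \leq \max\{u_0,\dots,u_q\} + \sum_{k=1}^q \lambda_k^{-1}.\] In particular, $\bigcap_{m=0}^q \{u_m \leq -\lambda_0^{-1}\} \subset \hat\Omega \subset \Omega$.
   Context: $n\ge 3$, $u_0,\dots,u_q$ are non-constant linear (affine) functions on $\mathbb{R}^n$, and $\Omega=\bigcap_{m=0}^q\{u_m\le 0\}$ is a compact convex polytope with non-empty interior. Fix a smooth even function $\eta:\mathbb{R}\to\mathbb{R}$ with $\eta(t)=|t|$ for $|t|\ge \frac12$ and $\eta''\ge 0$ everywhere. For $\gamma\in(0,\frac12)$ and $\lambda_0>1$ set $\lambda_k=\gamma^{-k}\lambda_0$ for $1\le k\le q$. Define $\hat u_0=u_0$ and, for $1\le k\le q$, $\hat u_k=\frac12\big(\hat u_{k-1}+u_k+\lambda_k^{-1}\eta(\lambda_k(\hat u_{k-1}-u_k))\big)$. Set $\hat\Omega=\{\hat u_q\le 0\}$. *)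

theory Defs
  imports "HOL-Analysis.Analysis"
begin

definition lam :: "real \<Rightarrow> real \<Rightarrow> nat \<Rightarrow> real" where
  "lam \<gamma> l0 k = l0 / \<gamma> ^ k"

primrec uhat :: "(real \<Rightarrow> real) \<Rightarrow> real \<Rightarrow> real \<Rightarrow> (nat \<Rightarrow> 'a \<Rightarrow> real) \<Rightarrow> nat \<Rightarrow> 'a \<Rightarrow> real" where
  "uhat \<eta> \<gamma> l0 u 0 x = u 0 x"
| "uhat \<eta> \<gamma> l0 u (Suc k) x =
     (uhat \<eta> \<gamma> l0 u k x + u (Suc k) x
      + (1 / lam \<gamma> l0 (Suc k)) * \<eta> (lam \<gamma> l0 (Suc k) * (uhat \<eta> \<gamma> l0 u k x - u (Suc k) x))) / 2"

end

theory Submission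
  imports Defs
begin

lemma eta_bounds:
  fixes \<eta> :: "real \<Rightarrow> real" and D :: "nat \<Rightarrow> real \<Rightarrow> real"
  assumes eta_smooth0: "D 0 = \<eta>"
    and eta_smooth: "\<And>k t. (D k has_real_derivative D (Suc k) t) (at t)"
    and eta_abs: "\<And>t. \<bar>t\<bar> \<ge> 1/2 \<Longrightarrow> \<eta> t = \<bar>t\<bar>"
    and eta_convex: "\<And>t. D 2 t \<ge> 0"
  shows "\<bar>t\<bar> \<le> \<eta> t \<and> \<eta> t \<le> \<bar>t\<bar> + 2"
proof -
  have d0: "\<And>t. (\<eta> has_real_derivative D 1 t) (at t)"
    using eta_smooth[of 0] eta_smooth0 by simp
  have d1: "\<And>t. (D 1 has_real_derivative D 2 t) (at t)"
    using eta_smooth[of 1] by (simp add: numeral_2_eq_2)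
  have mono: "\<And>a b. a \<le> b \<Longrightarrow> D 1 a \<le> D 1 b"
    by (rule DERIV_nonneg_imp_nondecreasing) (use d1 eta_convex in blast)+
  have D11: "D 1 1 = 1"
  proof -
    have "((\<lambda>t. t) has_real_derivative 1) (at (1::real))" by (rule DERIV_ident)
    then have "(\<eta> has_real_derivative 1) (at (1::real))"
      by (rule has_field_derivative_transform_within_open[where S="{1/2<..}"]) (auto simp: eta_abs)
    then show ?thesis using d0 DERIV_unique by blast
  qed
  have Dm1: "D 1 (-1) = -1"
  proof -
    have "((\<lambda>t. -t) has_real_derivative -1) (at (-1::real))"
      using DERIV_minus[OF DERIV_ident] by blast
    then have "(\<eta> has_real_derivative -1) (at (-1::real))"
      by (rule has_field_derivative_transform_within_open[where S="{..<-1/2}"]) (auto simp: eta_abs)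
    then show ?thesis using d0 DERIV_unique by blast
  qed
  have low1: "t \<le> \<eta> t" for t
  proof (cases "t < 1")
    case True
    from MVT2[OF True, of \<eta> "D 1"] d0 obtain z where z: "t < z" "z < 1" "\<eta> 1 - \<eta> t = (1 - t) * D 1 z"
      by blast
    have "D 1 z \<le> 1" using mono[of z 1] z D11 by simp
    then have "(1 - t) * D 1 z \<le> 1 - t" using True by (simp add: mult_left_le)
    moreover have "\<eta> 1 = 1" using eta_abs[of 1] by simp
    ultimately show ?thesis using z by linarith
  next
    case False then show ?thesis using eta_abs[of t] by simp
  qed
  have low2: "-t \<le> \<eta> t" for t
  proof (cases "-1 < t")
    case True
    from MVT2[OF True, of \<eta> "D 1"] d0 obtain z where z: "-1 < z" "z < t" "\<eta> t - \<eta> (-1) = (t + 1) * D 1 z"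
      by auto
    have "D 1 z \<ge> -1" using mono[of "-1" z] z Dm1 by simp
    then have "(t+1) * D 1 z \<ge> -(t+1)" using True
      using mult_left_mono[of "-1" "D 1 z" "t+1"] by simp
    moreover have "\<eta> (-1) = 1" using eta_abs[of "-1"] by simp
    ultimately show ?thesis using z by linarith
  next
    case False then show ?thesis using eta_abs[of t] by simp
  qed
  have up: "\<eta> t \<le> \<bar>t\<bar> + 2"
  proof (cases "\<bar>t\<bar> \<ge> 1")
    case True then show ?thesis using eta_abs[of t] by simp
  next
    case False
    then have T: "t < 1" by simp
    from MVT2[OF T, of \<eta> "D 1"] d0 obtain z where z: "t < z" "z < 1" "\<eta> 1 - \<eta> t = (1 - t) * D 1 z"
      by blast
    have "D 1 z \<ge> -1" using mono[of "-1" z] z Dm1 False by simp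
    then have "(1 - t) * D 1 z \<ge> -(1 - t)" using T
      using mult_left_mono[of "-1" "D 1 z" "1-t"] by simp
    moreover have "\<eta> 1 = 1" using eta_abs[of 1] by simp
    ultimately show ?thesis using z by linarith
  qed
  show ?thesis using low1 low2 up by (simp add: abs_le_iff)
qed

lemma lam_pos: "0 < \<gamma> \<Longrightarrow> 0 < l0 \<Longrightarrow> 0 < lam \<gamma> l0 k"
  by (simp add: lam_def)

lemma arith_step:
  fixes a b M e S r :: real
  assumes "M \<le> a" "a \<le> M + S" "0 \<le> S" "\<bar>a - b\<bar> \<le> e" "e \<le> \<bar>a - b\<bar> + 2 * r"
  shows "max M b \<le> (a + b + e) / 2 \<and> (a + b + e) / 2 \<le> max M b + (S + r)"
  using assms by (auto simp: abs_if max_def split: if_splits)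

lemma uhat_bounds:
  assumes eb: "\<And>t. \<bar>t\<bar> \<le> \<eta> t \<and> \<eta> t \<le> \<bar>t\<bar> + 2"
    and g: "0 < \<gamma>" and l: "0 < l0"
  shows "(MAX m\<in>{0..k}. u m x) \<le> uhat \<eta> \<gamma> l0 u k x
     \<and> uhat \<eta> \<gamma> l0 u k x \<le> (MAX m\<in>{0..k}. u m x) + (\<Sum>j=1..k. 1 / lam \<gamma> l0 j)"
proof (induction k)
  case 0
  then show ?case by simp
next
  case (Suc k)
  let ?M = "MAX m\<in>{0..k}. u m x"
  let ?a = "uhat \<eta> \<gamma> l0 u k x" and ?b = "u (Suc k) x" and ?L = "lam \<gamma> l0 (Suc k)"
  have M: "(MAX m\<in>{0..Suc k}. u m x) = max ?M ?b"
    by (simp add: atLeast0_atMost_Suc max.commute)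
  have S: "(\<Sum>j=1..Suc k. 1 / lam \<gamma> l0 j) = (\<Sum>j=1..k. 1 / lam \<gamma> l0 j) + 1 / ?L"
    by simp
  have L: "0 < ?L" using lam_pos g l by blast
  have e1: "\<bar>?L * (?a - ?b)\<bar> \<le> \<eta> (?L * (?a - ?b))" and e2: "\<eta> (?L * (?a - ?b)) \<le> \<bar>?L * (?a - ?b)\<bar> + 2"
    using eb by auto
  have q1: "(1 / ?L) * \<bar>?L * (?a - ?b)\<bar> = \<bar>?a - ?b\<bar>" using L by (simp add: abs_mult)
  have q2: "(1 / ?L) * \<bar>?L * (?a - ?b)\<bar> \<le> (1 / ?L) * \<eta> (?L * (?a - ?b))"
    using e1 L by (simp add: divide_right_mono)
  have q3: "(1 / ?L) * \<eta> (?L * (?a - ?b)) \<le> (1 / ?L) * (\<bar>?L * (?a - ?b)\<bar> + 2)"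
    using e2 L by (simp add: divide_right_mono)
  have q4: "(1 / ?L) * (\<bar>?L * (?a - ?b)\<bar> + 2) = \<bar>?a - ?b\<bar> + 2 / ?L"
    using L by (simp add: abs_mult add_divide_distrib)
  have E: "\<bar>?a - ?b\<bar> \<le> (1 / ?L) * \<eta> (?L * (?a - ?b))"
     "(1 / ?L) * \<eta> (?L * (?a - ?b)) \<le> \<bar>?a - ?b\<bar> + 2 / ?L"
    using q1 q2 apply linarith using q3 q4 by linarith
  have U: "uhat \<eta> \<gamma> l0 u (Suc k) x = (?a + ?b + (1 / ?L) * \<eta> (?L * (?a - ?b))) / 2" by simp
  have IH: "?M \<le> ?a" "?a \<le> ?M + (\<Sum>j=1..k. 1 / lam \<gamma> l0 j)" using Suc.IH by auto
  have "2 / ?L = 2 * (1 / ?L)" by simp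
  have S0: "0 \<le> (\<Sum>j=1..k. 1 / lam \<gamma> l0 j)"
    by (rule sum_nonneg) (use lam_pos g l in \<open>auto intro: less_imp_le\<close>)
  have E2: "(1 / ?L) * \<eta> (?L * (?a - ?b)) \<le> \<bar>?a - ?b\<bar> + 2 * (1 / ?L)"
    using E(2) by simp
  show ?case unfolding M S U
    by (rule arith_step[OF IH(1) IH(2) S0 E(1) E2])
qed



theorem lemma2p7:
  fixes u :: "nat \<Rightarrow> real ^ 'n \<Rightarrow> real" and q :: nat
    and \<eta> :: "real \<Rightarrow> real" and D :: "nat \<Rightarrow> real \<Rightarrow> real"
    and \<gamma> l0 :: real
  assumes dim: "CARD('n) \<ge> 3"
    and affine_u: "\<And>m. m \<le> q \<Longrightarrow> \<exists>a b. a \<noteq> 0 \<and> u m = (\<lambda>x. a \<bullet> x + b)"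
    and Omega_compact: "compact {x. \<forall>m\<le>q. u m x \<le> 0}"
    and Omega_interior: "interior {x. \<forall>m\<le>q. u m x \<le> 0} \<noteq> {}"
    and eta_smooth0: "D 0 = \<eta>"
    and eta_smooth: "\<And>k t. (D k has_real_derivative D (Suc k) t) (at t)"
    and eta_even: "\<And>t. \<eta> (- t) = \<eta> t"
    and eta_abs: "\<And>t. \<bar>t\<bar> \<ge> 1/2 \<Longrightarrow> \<eta> t = \<bar>t\<bar>"
    and eta_convex: "\<And>t. D 2 t \<ge> 0"
    and gamma: "0 < \<gamma>" "\<gamma> < 1/2"
    and lambda0: "l0 > 1"
  shows "(\<forall>x. (MAX m\<in>{0..q}. u m x) \<le> uhat \<eta> \<gamma> l0 u q x
            \<and> uhat \<eta> \<gamma> l0 u q x \<le> (MAX m\<in>{0..q}. u m x) + (\<Sum>k=1..q. 1 / lam \<gamma> l0 k))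
       \<and> {x. \<forall>m\<le>q. u m x \<le> - 1 / l0} \<subseteq> {x. uhat \<eta> \<gamma> l0 u q x \<le> 0}
       \<and> {x. uhat \<eta> \<gamma> l0 u q x \<le> 0} \<subseteq> {x. \<forall>m\<le>q. u m x \<le> 0}"
  proof -
  have eb: "\<And>t. \<bar>t\<bar> \<le> \<eta> t \<and> \<eta> t \<le> \<bar>t\<bar> + 2"
    using eta_bounds[OF eta_smooth0 eta_smooth eta_abs eta_convex] by blast
  have l: "0 < l0" using lambda0 by simp
  have B: "\<And>x. (MAX m\<in>{0..q}. u m x) \<le> uhat \<eta> \<gamma> l0 u q x
     \<and> uhat \<eta> \<gamma> l0 u q x \<le> (MAX m\<in>{0..q}. u m x) + (\<Sum>j=1..q. 1 / lam \<gamma> l0 j)"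
    by (rule uhat_bounds[OF eb gamma(1) l])
  have geo: "(\<Sum>j=1..q. \<gamma> ^ j) < 1"
  proof -
    have "(\<Sum>j=1..q. \<gamma> ^ j) \<le> (\<Sum>j=1..q. (1/2::real) ^ j)"
      by (rule sum_mono, rule power_mono) (use gamma in auto)
    also have "\<dots> < 1"
    proof (induction q)
      case 0 then show ?case by simp
    next
      case (Suc q)
      have "(\<Sum>j=1..q. (1/2::real) ^ j) = 1 - (1/2)^q"
        by (induction q) (auto simp: field_simps)
      then show ?case by simp
    qed
    finally show ?thesis .
  qed
  have sumeq: "(\<Sum>j=1..q. 1 / lam \<gamma> l0 j) = (\<Sum>j=1..q. \<gamma> ^ j) / l0"
    by (simp add: lam_def sum_divide_distrib)
  have sumlt: "(\<Sum>j=1..q. 1 / lam \<gamma> l0 j) < 1 / l0"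
    unfolding sumeq using geo l by (simp add: divide_strict_right_mono)
  have P2: "{x. \<forall>m\<le>q. u m x \<le> - 1 / l0} \<subseteq> {x. uhat \<eta> \<gamma> l0 u q x \<le> 0}"
  proof safe
    fix x assume A: "\<forall>m\<le>q. u m x \<le> - 1 / l0"
    have "(MAX m\<in>{0..q}. u m x) \<le> - 1 / l0" using A by (simp add: Max_le_iff)
    moreover have "uhat \<eta> \<gamma> l0 u q x \<le> (MAX m\<in>{0..q}. u m x) + (\<Sum>j=1..q. 1 / lam \<gamma> l0 j)"
      using B[of x] by blast
    ultimately show "uhat \<eta> \<gamma> l0 u q x \<le> 0" using sumlt by linarith
  qed
  have P3: "{x. uhat \<eta> \<gamma> l0 u q x \<le> 0} \<subseteq> {x. \<forall>m\<le>q. u m x \<le> 0}"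
  proof safe
    fix x m assume A: "uhat \<eta> \<gamma> l0 u q x \<le> 0" and m: "m \<le> q"
    have "u m x \<le> (MAX m\<in>{0..q}. u m x)" using m by (simp add: Max_ge_iff)
    then show "u m x \<le> 0" using B[of x] A by linarith
  qed
  show ?thesis using B P2 P3 by blast
qed

end
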